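(* Each formula $\Phi\in\mathtt{incl}$-$\mathtt{ESO}$-$\mathtt{HORN}$ is equivalent (i.e. $\langle w\rangle\models\Phi\iff\langle w\rangle\models\Phi'$ for all $w\in\Sigma^+$) to a formula $\Phi'=\exists\mathbf{R}'\forall x\forall y\,\psi'\in\mathtt{incl}$-$\mathtt{ESO}$-$\mathtt{HORN}$ each of whose clauses is of one of the following forms: (i) an input clause $x=y\wedge Q_s(x)\to R(x,y)$, for $s\in\Sigma$, $R\in\mathbf{R}'$; (ii) the contradiction clause $\mathtt{min}(x)\wedge\mathtt{max}(y)\wedge R_\bot(x,y)\to\bot$, for a fixed $R_\bot\in\mathbf{R}'$; (iii) a computation clause $x<y\wedge\delta_1\wedge\cdots\wedge\delta_r\to R(x,y)$, with $R\in\mathbf{R}'$, where each hypothesis $\delta_i$ is an atom of the form $S(x+1,y)$ or $S(x,y-1)$ for $S\in\mathbf{R}'$.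
   Context: Fix a finite alphabet $\Sigma$. A nonempty word $w=w_1\cdots w_n$ is represented by the structure $\langle w\rangle=([1,n];(Q_s)_{s\in\Sigma},\mathtt{min},\mathtt{max},\mathtt{suc},\mathtt{pred})$ with $Q_s(i)\iff w_i=s$, $\mathtt{min}(i)\iff i=1$, $\mathtt{max}(i)\iff i=n$, $\mathtt{suc}(i)=\min(i+1,n)$, $\mathtt{pred}(i)=\max(i-1,1)$. For an integer $a$, $x+a$ denotes $\mathtt{suc}^a(x)$ if $a\ge0$ and $\mathtt{pred}^{-a}(x)$ if $a<0$; $y-b=\mathtt{pred}^b(y)$. A formula of $\mathtt{incl}$-$\mathtt{ESO}$-$\mathtt{HORN}$ (inclusion Horn formula) is $\Phi=\exists\mathbf{R}\forall x\forall y\,\psi(x,y)$, $\mathbf{R}$ a finite set of binary relation symbols, $\psi$ a conjunction of Horn clauses over the signature $\{(Q_s)_{s\in\Sigma},\mathtt{min},\mathtt{max},\mathtt{suc},\mathtt{pred}\}\cup\mathbf{R}\cup\{=,\le,<\}$ (usual order on $[1,n]$), each of the form $x\le y\wedge\delta_1\wedge\cdots\wedge\delta_r\to\delta_0$ with $\delta_0$ an atom $R(x,y)$ ($R\in\mathbf{R}$) or $\bot$, and each $\delta_i$ one of: $U(x+a)$, $\neg U(x+a)$, $U(y+a)$, $\neg U(y+a)$ for $U\in\{(Q_s)_{s\in\Sigma},\mathtt{min},\mathtt{max}\}$ and $a\in\mathbb Z$; $x=y$ or $x<y$; a conjunction $S(x+a,y-b)\wedge x+a\le y-b$ with $S\in\mathbf{R}$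 and integers $a,b\ge0$. (In the normal form, the leading hypothesis $x\le y$ of a clause is redundant when $x=y$ or $x<y$ is present.) *)

theory Defs
  imports Main
begin

text \<open>Relation symbols are natural numbers; the set of existentially quantified
  relation symbols of a formula is the (finite) set of symbols occurring in it.
  Positions of a word w are 1..length w.\<close>

datatype fvar = VX | VY

datatype 'a upred = PQ 'a | PMin | PMax

datatype 'a hyp =
    HUnary bool fvar "'a upred" int   \<comment> \<open>polarity (True = positive), variable, predicate, offset a: U(v+a) or \<not>U(v+a)\<close>
  | HEq
  | HLt
  | HRel nat nat nat                   \<comment> \<open>HRel S a b: S(x+a, y-b) \<and> x+a \<le> y-b\<close>

datatype concl = CRel nat | CBot

type_synonym 'a clause = "'a hyp list \<times> concl"
type_synonym 'a formula = "'a clause list"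

definition suc_pos :: "nat \<Rightarrow> nat \<Rightarrow> nat" where
  "suc_pos n i = min (i + 1) n"

definition pred_pos :: "nat \<Rightarrow> nat" where
  "pred_pos i = max (i - 1) 1"

definition shift :: "nat \<Rightarrow> nat \<Rightarrow> int \<Rightarrow> nat" where
  "shift n i a = (if a \<ge> 0 then (suc_pos n ^^ nat a) i else (pred_pos ^^ nat (- a)) i)"

fun upred_holds :: "'a list \<Rightarrow> 'a upred \<Rightarrow> nat \<Rightarrow> bool" where
  "upred_holds w (PQ s) p = (w ! (p - 1) = s)"
| "upred_holds w PMin p = (p = 1)"
| "upred_holds w PMax p = (p = length w)"

fun hyp_holds :: "'a list \<Rightarrow> (nat \<Rightarrow> nat \<Rightarrow> nat \<Rightarrow> bool) \<Rightarrow> nat \<Rightarrow> nat \<Rightarrow> 'a hyp \<Rightarrow> bool" where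
  "hyp_holds w \<rho> x y (HUnary pol v U a) =
     (let p = shift (length w) (case v of VX \<Rightarrow> x | VY \<Rightarrow> y) a
      in (if pol then upred_holds w U p else \<not> upred_holds w U p))"
| "hyp_holds w \<rho> x y HEq = (x = y)"
| "hyp_holds w \<rho> x y HLt = (x < y)"
| "hyp_holds w \<rho> x y (HRel S a b) =
     (let i = shift (length w) x (int a); j = shift (length w) y (- int b)
      in \<rho> S i j \<and> i \<le> j)"

fun concl_holds :: "(nat \<Rightarrow> nat \<Rightarrow> nat \<Rightarrow> bool) \<Rightarrow> nat \<Rightarrow> nat \<Rightarrow> concl \<Rightarrow> bool" where
  "concl_holds \<rho> x y (CRel R) = \<rho> R x y"
| "concl_holds \<rho> x y CBot = False"

definition clause_holds :: "'a list \<Rightarrow> (nat \<Rightarrow> nat \<Rightarrow> nat \<Rightarrow> bool) \<Rightarrow> 'a clause \<Rightarrow> bool" where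
  "clause_holds w \<rho> c = (\<forall>x\<in>{1..length w}. \<forall>y\<in>{1..length w}.
      x \<le> y \<and> (\<forall>h\<in>set (fst c). hyp_holds w \<rho> x y h) \<longrightarrow> concl_holds \<rho> x y (snd c))"

definition sat :: "'a list \<Rightarrow> 'a formula \<Rightarrow> bool" where
  "sat w \<phi> = (\<exists>\<rho>. \<forall>c\<in>set \<phi>. clause_holds w \<rho> c)"

definition input_clause :: "'a clause \<Rightarrow> bool" where
  "input_clause c = (\<exists>s R. set (fst c) = {HEq, HUnary True VX (PQ s) 0} \<and> snd c = CRel R)"

definition contradiction_clause :: "nat \<Rightarrow> 'a clause \<Rightarrow> bool" where
  "contradiction_clause Rbot c =
     (set (fst c) = {HUnary True VX PMin 0, HUnary True VY PMax 0, HRel Rbot 0 0} \<and> snd c = CBot)"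

definition computation_clause :: "'a clause \<Rightarrow> bool" where
  "computation_clause c = (HLt \<in> set (fst c) \<and>
     (\<forall>h\<in>set (fst c). h = HLt \<or> (\<exists>S. h = HRel S 1 0 \<or> h = HRel S 0 1)) \<and>
     (\<exists>R. snd c = CRel R))"

definition normal_form :: "'a formula \<Rightarrow> bool" where
  "normal_form \<phi> = (\<exists>Rbot. \<forall>c\<in>set \<phi>.
      input_clause c \<or> contradiction_clause Rbot c \<or> computation_clause c)"

end

theory Submission
  imports Defs
begin


definition sub :: "'a list \<Rightarrow> nat \<Rightarrow> nat \<Rightarrow> 'a list" where
  "sub w i j = take (j + 1 - i) (drop (i - 1) w)"

lemma sub_len: "1 \<le> i \<Longrightarrow> i \<le> j \<Longrightarrow> j \<le> length w \<Longrightarrow> length (sub w i j) = j + 1 - i"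
  by (simp add: sub_def)
lemma sub_single: "1 \<le> i \<Longrightarrow> i \<le> length w \<Longrightarrow> sub w i i = [w ! (i - 1)]"
  by (simp add: sub_def take_Suc_conv_app_nth)
lemma sub_tl: "1 \<le> i \<Longrightarrow> i < j \<Longrightarrow> j \<le> length w \<Longrightarrow> tl (sub w i j) = sub w (i+1) j"
  by (cases i) (auto simp: sub_def tl_take drop_Suc drop_tl)
lemma sub_butlast: "1 \<le> i \<Longrightarrow> i < j \<Longrightarrow> j \<le> length w \<Longrightarrow> butlast (sub w i j) = sub w i (j - 1)"
  by (simp add: sub_def butlast_take)
lemma sub_all: "sub w (Suc 0) (length w) = w"
  by (simp add: sub_def)

lemma shift0: "shift n i 0 = i"
  by (simp add: shift_def)
declare Let_def[simp] shift0[simp]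

lemma shift1: "i < n \<Longrightarrow> shift n i 1 = i + 1"
  by (simp add: shift_def suc_pos_def)
lemma shiftm1: "1 < i \<Longrightarrow> shift n i (-1) = i - 1"
  by (simp add: shift_def pred_pos_def)

lemma dta:
  fixes L :: "('a::finite) list set" and I :: "'a list \<Rightarrow> 'b"
  assumes fin: "finite (range I)"
    and comb: "\<And>u v. 2 \<le> length u \<Longrightarrow> 2 \<le> length v \<Longrightarrow> I (tl u) = I (tl v) \<Longrightarrow> I (butlast u) = I (butlast v) \<Longrightarrow> I u = I v"
    and inv: "\<And>u v. u \<noteq> [] \<Longrightarrow> v \<noteq> [] \<Longrightarrow> I u = I v \<Longrightarrow> (u \<in> L \<longleftrightarrow> v \<in> L)"
  shows "\<exists>\<phi>'. normal_form \<phi>' \<and> (\<forall>w::'a list. w \<noteq> [] \<longrightarrow> (w \<in> L \<longleftrightarrow> sat w \<phi>'))"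
proof -
  obtain f and n :: nat where fn: "f ` range I = {i. i < n}" "inj_on f (range I)"
    using finite_imp_inj_to_nat_seg[OF fin] by blast
  define T where "T u = f (I u)" for u
  have Tlt: "T u < n" for u using fn(1) unfolding T_def by blast
  have Teq: "T u = T v \<Longrightarrow> I u = I v" for u v
    using fn(2) unfolding T_def by (meson inj_onD rangeI)
  define Ci where "Ci = (\<lambda>s. ([HEq, HUnary True VX (PQ s) 0], CRel (T [s]))) ` (UNIV :: 'a set)"
  define Cb1 where "Cb1 = (\<lambda>s. ([HEq, HUnary True VX (PQ s) 0], CRel n)) ` {s. [s] \<notin> L}"
  define g where "g = (\<lambda>(i,j,k). ([HLt, HRel i 1 0, HRel j 0 1], CRel k) :: 'a clause)"
  define Cc where "Cc = g ` {(T (tl u), T (butlast u), T u) | u. 2 \<le> length u}"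
  define Cb2 where "Cb2 = g ` {(T (tl u), T (butlast u), n) | u. 2 \<le> length u \<and> u \<notin> L}"
  define Ccon where "Ccon = {([HUnary True VX PMin 0, HUnary True VY PMax 0, HRel n 0 0], CBot) :: 'a clause}"
  define A where "A = Ci \<union> Cb1 \<union> Cc \<union> Cb2 \<union> Ccon"
  have "finite Cc" unfolding Cc_def
    by (rule finite_imageI, rule finite_subset[of _ "{..<n} \<times> {..<n} \<times> {..<n}"]) (auto simp: Tlt)
  moreover have "finite Cb2" unfolding Cb2_def
    by (rule finite_imageI, rule finite_subset[of _ "{..<n} \<times> {..<n} \<times> {n}"]) (auto simp: Tlt)
  ultimately have "finite A" unfolding A_def Ci_def Cb1_def Ccon_def by simp
  then obtain \<phi>' where phi: "set \<phi>' = A" using finite_list by blast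
  have nf: "normal_form \<phi>'"
    unfolding normal_form_def phi
  proof (intro exI[of _ n] ballI)
    fix c assume "c \<in> A"
    then show "input_clause c \<or> contradiction_clause n c \<or> computation_clause c"
      unfolding A_def
    proof (elim UnE)
      assume "c \<in> Ci" then show ?thesis by (auto simp: Ci_def input_clause_def)
    next
      assume "c \<in> Cb1" then show ?thesis by (auto simp: Cb1_def input_clause_def)
    next
      assume "c \<in> Cc" then show ?thesis by (auto simp: Cc_def g_def computation_clause_def)
    next
      assume "c \<in> Cb2" then show ?thesis by (auto simp: Cb2_def g_def computation_clause_def)
    next
      assume "c \<in> Ccon" then show ?thesis by (auto simp: Ccon_def contradiction_clause_def)
    qed
  qed
  have sem: "w \<in> L \<longleftrightarrow> sat w \<phi>'" if wne: "w \<noteq> []" for w :: "'a list"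
  proof
    assume wL: "w \<in> L"
    define \<rho> where "\<rho> R i j = (1 \<le> i \<and> i \<le> j \<and> j \<le> length w \<and> (R = T (sub w i j) \<or> (R = n \<and> sub w i j \<notin> L)))" for R i j
    show "sat w \<phi>'" unfolding sat_def
    proof (intro exI[of _ \<rho>] ballI)
      fix c assume "c \<in> set \<phi>'"
      then have "c \<in> A" using phi by simp
      then show "clause_holds w \<rho> c"
        unfolding A_def
      proof (elim UnE)
        assume "c \<in> Ci" then show ?thesis
          by (auto simp: Ci_def clause_holds_def shift0 \<rho>_def sub_single)
      next
        assume "c \<in> Cb1" then show ?thesis
          by (auto simp: Cb1_def clause_holds_def shift0 \<rho>_def sub_single)
      next
        assume "c \<in> Cc"
        then obtain u where u: "2 \<le> length u" "c = g (T (tl u), T (butlast u), T u)"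
          unfolding Cc_def by auto
        have main: "\<rho> (T u) x y" if xy: "1 \<le> x" "y \<le> length w" "x < y"
            "\<rho> (T (tl u)) (shift (length w) x 1) y"
            "\<rho> (T (butlast u)) x (shift (length w) y (- 1))" for x y
        proof -
          from xy have a: "T (tl u) = T (sub w (x+1) y)" "T (butlast u) = T (sub w x (y-1))"
            using Tlt[of "tl u"] Tlt[of "butlast u"]
            by (auto simp: shift1 shiftm1 \<rho>_def)
          have "I u = I (sub w x y)"
            apply (rule comb)
            using u xy Teq[OF a(1)] Teq[OF a(2)] by (auto simp: sub_len sub_tl sub_butlast)
          then show "\<rho> (T u) x y" using xy by (auto simp: \<rho>_def T_def)
        qed
        then show ?thesis by (auto simp: clause_holds_def u g_def)
      next
        assume "c \<in> Cb2"
        then obtain u where u: "2 \<le> length u" "u \<notin> L" "c = g (T (tl u), T (butlast u), n)"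
          unfolding Cb2_def by auto
        have main: "\<rho> n x y" if xy: "1 \<le> x" "y \<le> length w" "x < y"
            "\<rho> (T (tl u)) (shift (length w) x 1) y"
            "\<rho> (T (butlast u)) x (shift (length w) y (- 1))" for x y
        proof -
          from xy have a: "T (tl u) = T (sub w (x+1) y)" "T (butlast u) = T (sub w x (y-1))"
            using Tlt[of "tl u"] Tlt[of "butlast u"]
            by (auto simp: shift1 shiftm1 \<rho>_def)
          have "I u = I (sub w x y)"
            apply (rule comb)
            using u xy Teq[OF a(1)] Teq[OF a(2)] by (auto simp: sub_len sub_tl sub_butlast)
          moreover have "sub w x y \<noteq> []" "u \<noteq> []" using xy u by (auto simp: sub_def)
          ultimately have "sub w x y \<notin> L" using inv u(2) by blast
          then show "\<rho> n x y" using xy by (auto simp: \<rho>_def)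
        qed
        then show ?thesis by (auto simp: clause_holds_def u g_def)
      next
        assume "c \<in> Ccon"
        then show ?thesis using wL Tlt[of w]
          by (auto simp: Ccon_def clause_holds_def shift0 \<rho>_def sub_all)
      qed
    qed
  next
    assume "sat w \<phi>'"
    then obtain \<rho> where r: "\<forall>c\<in>A. clause_holds w \<rho> c" unfolding sat_def phi by blast
    have key: "\<rho> (T (sub w i (i + d))) i (i + d) \<and> (sub w i (i+d) \<notin> L \<longrightarrow> \<rho> n i (i+d))"
      if "1 \<le> i" "i + d \<le> length w" for d i
      using that
    proof (induction d arbitrary: i)
      case 0
      let ?s = "w ! (i - 1)"
      have c1: "([HEq, HUnary True VX (PQ ?s) 0], CRel (T [?s])) \<in> A" unfolding A_def Ci_def by auto
      have "\<rho> (T [?s]) i i" using r[rule_format, OF c1] 0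
        by (auto simp: clause_holds_def shift0)
      moreover have "[?s] \<notin> L \<longrightarrow> \<rho> n i i"
      proof
        assume "[?s] \<notin> L"
        then have c2: "([HEq, HUnary True VX (PQ ?s) 0], CRel n) \<in> A" unfolding A_def Cb1_def by auto
        show "\<rho> n i i" using r[rule_format, OF c2] 0
          by (auto simp: clause_holds_def shift0)
      qed
      ultimately show ?case using 0 by (simp add: sub_single)
    next
      case (Suc d)
      define u where "u = sub w i (i + Suc d)"
      have ul: "2 \<le> length u" using Suc.prems by (simp add: u_def sub_len)
      have tl: "tl u = sub w (i+1) ((i+1) + d)" using Suc.prems by (simp add: u_def sub_tl)
      have bl: "butlast u = sub w i (i + d)" using Suc.prems by (simp add: u_def sub_butlast)
      have ih1: "\<rho> (T (tl u)) (i+1) (i + Suc d)" using Suc.IH[of "i+1"] Suc.prems tl by simp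
      have ih2: "\<rho> (T (butlast u)) i (i + d)" using Suc.IH[of i] Suc.prems bl by simp
      have sh: "shift (length w) i 1 = i + 1" "shift (length w) (i + Suc d) (-1) = i + d"
        using Suc.prems by (auto simp: shift1 shiftm1)
      have c1: "g (T (tl u), T (butlast u), T u) \<in> A" unfolding A_def Cc_def using ul by blast
      have "\<rho> (T u) i (i + Suc d)" using r[rule_format, OF c1] Suc.prems ih1 ih2 sh
        by (auto simp: clause_holds_def g_def)
      moreover have "u \<notin> L \<longrightarrow> \<rho> n i (i + Suc d)"
      proof
        assume "u \<notin> L"
        then have c2: "g (T (tl u), T (butlast u), n) \<in> A" unfolding A_def Cb2_def using ul by blast
        show "\<rho> n i (i + Suc d)" using r[rule_format, OF c2] Suc.prems ih1 ih2 sh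
          by (auto simp: clause_holds_def g_def)
      qed
      ultimately show ?case by (simp add: u_def)
    qed
    show "w \<in> L"
    proof (rule ccontr)
      assume "w \<notin> L"
      then have "\<rho> n 1 (length w)" using key[of 1 "length w - 1"] wne by (simp add: sub_all)
      moreover have "([HUnary True VX PMin 0, HUnary True VY PMax 0, HRel n 0 0], CBot) \<in> A"
        unfolding A_def Ccon_def by auto
      ultimately have cl: "clause_holds w \<rho> ([HUnary True VX PMin 0, HUnary True VY PMax 0, HRel n 0 0], CBot)"
        using r by blast
      have m: "1 \<in> {1..length w}" "length w \<in> {1..length w}" using wne by (auto simp: Suc_le_eq)
      show False using cl[unfolded clause_holds_def, rule_format, OF m] \<open>\<rho> n 1 (length w)\<close> wne by (simp add: Suc_le_eq)
    qed
  qed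
  show ?thesis using nf sem by blast
qed



lemma hyp_mono: "(\<And>S i j. \<rho> S i j \<longrightarrow> \<rho>' S i j) \<Longrightarrow> hyp_holds w \<rho> x y h \<longrightarrow> hyp_holds w \<rho>' x y h"
  by (cases h) (auto simp: Let_def)

inductive der :: "'a formula \<Rightarrow> 'a list \<Rightarrow> nat \<Rightarrow> nat \<Rightarrow> nat \<Rightarrow> bool" for \<phi> w where
  der_intro: "c \<in> set \<phi> \<Longrightarrow> snd c = CRel R \<Longrightarrow> 1 \<le> x \<Longrightarrow> x \<le> y \<Longrightarrow> y \<le> length w \<Longrightarrow>
     \<forall>h\<in>set (fst c). hyp_holds w (der \<phi> w) x y h \<Longrightarrow> der \<phi> w R x y"
  monos hyp_mono

lemma sucpow: "i \<le> n \<Longrightarrow> (suc_pos n ^^ k) i = min (i+k) n"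
  by (induction k) (auto simp: suc_pos_def)
lemma predpow: "1 \<le> i \<Longrightarrow> (pred_pos ^^ k) i = max (i-k) 1"
  by (induction k) (auto simp: pred_pos_def)
lemma shift_nonneg: "i \<le> n \<Longrightarrow> shift n i (int a) = min (i+a) n"
  by (simp add: shift_def sucpow)
lemma shift_neg: "1 \<le> i \<Longrightarrow> i \<le> n \<Longrightarrow> shift n i (- int b) = max (i-b) 1"
  by (cases "b = 0") (auto simp: shift_def sucpow predpow)
lemma shift_gen: "1 \<le> i \<Longrightarrow> i \<le> n \<Longrightarrow> shift n i a = (if a \<ge> 0 then min (i + nat a) n else max (i - nat (-a)) 1)"
  by (auto simp: shift_def sucpow predpow)

fun hb :: "nat \<Rightarrow> 'a hyp \<Rightarrow> bool" where
  "hb K (HUnary p v U a) = (\<bar>a\<bar> \<le> int K)"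
| "hb K (HRel S a b) = (a \<le> K \<and> b \<le> K)"
| "hb K HEq = True"
| "hb K HLt = True"

lemma hb_mono: "hb K h \<Longrightarrow> K \<le> K' \<Longrightarrow> hb K' h"
  by (cases h) auto

lemma hb_exists: "finite A \<Longrightarrow> \<exists>K. \<forall>h\<in>A. hb K h"
proof (induction rule: finite_induct)
  case empty then show ?case by simp
next
  case (insert h A)
  then obtain K where K: "\<forall>h\<in>A. hb K h" by blast
  define K' where "K' = (case h of HUnary _ _ _ a \<Rightarrow> nat \<bar>a\<bar> | HRel _ a b \<Rightarrow> a + b | _ \<Rightarrow> 0)"
  have K': "hb K' h" unfolding K'_def by (cases h) auto
  show ?case using K K' hb_mono[of K _ "max K K'"] hb_mono[of K' _ "max K K'"]
    by (intro exI[of _ "max K K'"]) auto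
qed

lemma der_bounds: "der \<phi> w R x y \<Longrightarrow> 1 \<le> x \<and> x \<le> y \<and> y \<le> length w \<and> (\<exists>c\<in>set \<phi>. snd c = CRel R)"
  by (induction rule: der.induct) auto

lemma der_clause: "c \<in> set \<phi> \<Longrightarrow> snd c = CRel R \<Longrightarrow> clause_holds w (der \<phi> w) c"
  unfolding clause_holds_def by (auto intro: der.intros)

lemma der_min:
  assumes cl: "\<forall>c\<in>set \<phi>. clause_holds w \<rho> c"
  shows "der \<phi> w R x y \<Longrightarrow> \<rho> R x y"
proof (induction rule: der.induct)
  case (der_intro c R x y)
  have "\<forall>h\<in>set (fst c). hyp_holds w \<rho> x y h"
    using der_intro(6) hyp_mono[of "\<lambda>S i j. der \<phi> w S i j \<and> \<rho> S i j" \<rho>] by blast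
  then show ?case using cl der_intro(1-5) unfolding clause_holds_def by force
qed

lemma sat_iff: "sat w \<phi> \<longleftrightarrow> (\<forall>c\<in>set \<phi>. snd c = CBot \<longrightarrow>
   \<not>(\<exists>x y. 1 \<le> x \<and> x \<le> y \<and> y \<le> length w \<and> (\<forall>h\<in>set (fst c). hyp_holds w (der \<phi> w) x y h)))"
proof
  assume "sat w \<phi>"
  then obtain \<rho> where r: "\<forall>c\<in>set \<phi>. clause_holds w \<rho> c" unfolding sat_def by blast
  show "\<forall>c\<in>set \<phi>. snd c = CBot \<longrightarrow>
   \<not>(\<exists>x y. 1 \<le> x \<and> x \<le> y \<and> y \<le> length w \<and> (\<forall>h\<in>set (fst c). hyp_holds w (der \<phi> w) x y h))"
  proof (intro ballI impI notI, elim exE conjE)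
    fix c x y assume c: "c \<in> set \<phi>" "snd c = CBot" "1 \<le> x" "x \<le> y" "y \<le> length w"
      and h: "\<forall>h\<in>set (fst c). hyp_holds w (der \<phi> w) x y h"
    have "\<forall>h\<in>set (fst c). hyp_holds w \<rho> x y h"
      using h hyp_mono[of "der \<phi> w" \<rho>] der_min[OF r] by blast
    then show False using r c unfolding clause_holds_def by force
  qed
next
  assume H: "\<forall>c\<in>set \<phi>. snd c = CBot \<longrightarrow>
   \<not>(\<exists>x y. 1 \<le> x \<and> x \<le> y \<and> y \<le> length w \<and> (\<forall>h\<in>set (fst c). hyp_holds w (der \<phi> w) x y h))"
  have "clause_holds w (der \<phi> w) c" if "c \<in> set \<phi>" for c
  proof (cases "snd c")
    case (CRel R) then show ?thesis using der_clause that by blast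
  next
    case CBot then show ?thesis using H that unfolding clause_holds_def by auto
  qed
  then show "sat w \<phi>" unfolding sat_def by blast
qed

lemma hyp_transfer:
  assumes "hb K h" "hyp_holds w \<rho> x y h"
    and Ux: "\<And>U a. \<bar>a\<bar> \<le> int K \<Longrightarrow> upred_holds w U (shift (length w) x a) = upred_holds w' U (shift (length w') x' a)"
    and Uy: "\<And>U a. \<bar>a\<bar> \<le> int K \<Longrightarrow> upred_holds w U (shift (length w) y a) = upred_holds w' U (shift (length w') y' a)"
    and E: "(x = y) = (x' = y')" "(x < y) = (x' < y')"
    and R: "\<And>S a b. a \<le> K \<Longrightarrow> b \<le> K \<Longrightarrow> \<rho> S (shift (length w) x (int a)) (shift (length w) y (- int b)) \<Longrightarrow>
       shift (length w) x (int a) \<le> shift (length w) y (- int b) \<Longrightarrow>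
       \<rho>' S (shift (length w') x' (int a)) (shift (length w') y' (- int b)) \<and>
       shift (length w') x' (int a) \<le> shift (length w') y' (- int b)"
  shows "hyp_holds w' \<rho>' x' y' h"
proof (cases h)
  case (HUnary p v U a)
  then show ?thesis using assms(1,2) Ux Uy by (cases v) (auto simp: Let_def)
next
  case (HRel S a b)
  then show ?thesis using assms(1,2) R by (auto simp: Let_def)
qed (use assms in auto)


lemma shift_ge: "1 \<le> x \<Longrightarrow> x \<le> n \<Longrightarrow> x \<le> shift n x (int a)"
  by (simp add: shift_nonneg)
lemma shift_le: "1 \<le> y \<Longrightarrow> y \<le> n \<Longrightarrow> shift n y (- int b) \<le> y"
  by (simp add: shift_neg)

lemma int_cases_K: "\<bar>a\<bar> \<le> int K \<Longrightarrow> (\<And>k. a = int k \<Longrightarrow> k \<le> K \<Longrightarrow> P) \<Longrightarrow> (\<And>k. a = - int k \<Longrightarrow> k \<le> K \<Longrightarrow> P) \<Longrightarrow> P"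
proof (cases "a \<ge> 0")
  case True
  assume h: "\<bar>a\<bar> \<le> int K" "\<And>k. a = int k \<Longrightarrow> k \<le> K \<Longrightarrow> P"
  show P by (rule h(2)[of "nat a"]) (use True h(1) in auto)
next
  case False
  assume h: "\<bar>a\<bar> \<le> int K" "\<And>k. a = - int k \<Longrightarrow> k \<le> K \<Longrightarrow> P"
  show P by (rule h(2)[of "nat (- a)"]) (use False h(1) in auto)
qed

lemma shift_d1: "K+3 \<le> p \<Longrightarrow> p \<le> n \<Longrightarrow> \<bar>a\<bar> \<le> int K \<Longrightarrow>
   shift n p a = Suc (shift (n-1) (p-1) a) \<and> 3 \<le> shift n p a \<and> shift n p a \<le> n"
  by (erule int_cases_K) (auto simp: shift_nonneg shift_neg)

lemma upred_d1: "3 \<le> P \<Longrightarrow> P \<le> length (c#w') \<Longrightarrow> upred_holds (c#w') U P = upred_holds w' U (P-1)"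
  by (cases U) (auto simp: nth_Cons')

lemma hyp_d1_fwd:
  assumes "hb K h" "K+3 \<le> x" "x \<le> y" "y \<le> length (c#w')"
    and r: "\<forall>S i j. x \<le> i \<longrightarrow> \<rho> S i j \<longrightarrow> \<rho>' S (i-1) (j-1)"
    and "hyp_holds (c#w') \<rho> x y h"
  shows "hyp_holds w' \<rho>' (x-1) (y-1) h"
proof (rule hyp_transfer[OF assms(1,6)])
  fix U a assume a: "\<bar>a\<bar> \<le> int K"
  show "upred_holds (c # w') U (shift (length (c # w')) x a) = upred_holds w' U (shift (length w') (x - 1) a)"
  proof -
    have P: "shift (length (c#w')) x a = Suc (shift (length w') (x-1) a)" "3 \<le> shift (length (c#w')) x a"
      "shift (length (c#w')) x a \<le> length (c#w')"
      using shift_d1[of K x "length (c#w')" a] assms(2-4) a by auto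
    show ?thesis using upred_d1[OF P(2) P(3), of U] unfolding P(1) by simp
  qed
  show "upred_holds (c # w') U (shift (length (c # w')) y a) = upred_holds w' U (shift (length w') (y - 1) a)"
  proof -
    have P: "shift (length (c#w')) y a = Suc (shift (length w') (y-1) a)" "3 \<le> shift (length (c#w')) y a"
      "shift (length (c#w')) y a \<le> length (c#w')"
      using shift_d1[of K y "length (c#w')" a] assms(2-4) a by auto
    show ?thesis using upred_d1[OF P(2) P(3), of U] unfolding P(1) by simp
  qed
next
  fix S a b assume ab: "a \<le> K" "b \<le> K"
    "\<rho> S (shift (length (c # w')) x (int a)) (shift (length (c # w')) y (- int b))"
    "shift (length (c # w')) x (int a) \<le> shift (length (c # w')) y (- int b)"
  have e1: "shift (length (c # w')) x (int a) = Suc (shift (length w') (x-1) (int a))"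
    using shift_d1[of K x "length (c#w')" "int a"] assms(2-4) ab by simp
  have e2: "shift (length (c # w')) y (- int b) = Suc (shift (length w') (y-1) (- int b))"
    using shift_d1[of K y "length (c#w')" "- int b"] assms(2-4) ab by simp
  have "x \<le> shift (length (c # w')) x (int a)" using shift_ge[of x] assms(2-4) by simp
  then show "\<rho>' S (shift (length w') (x - 1) (int a)) (shift (length w') (y - 1) (- int b)) \<and>
       shift (length w') (x - 1) (int a) \<le> shift (length w') (y - 1) (- int b)"
    using r ab(3,4) e1 e2 by fastforce
qed (use assms in auto)

lemma hyp_d1_bwd:
  assumes "hb K h" "K+3 \<le> x" "x \<le> y" "y \<le> length (c#w')"
    and r: "\<forall>S i j. x - 1 \<le> i \<longrightarrow> \<rho>' S i j \<longrightarrow> \<rho> S (Suc i) (Suc j)"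
    and "hyp_holds w' \<rho>' (x-1) (y-1) h"
  shows "hyp_holds (c#w') \<rho> x y h"
proof (rule hyp_transfer[OF assms(1,6)])
  fix U a assume a: "\<bar>a\<bar> \<le> int K"
  show "upred_holds w' U (shift (length w') (x - 1) a) = upred_holds (c # w') U (shift (length (c # w')) x a)"
  proof -
    have P: "shift (length (c#w')) x a = Suc (shift (length w') (x-1) a)" "3 \<le> shift (length (c#w')) x a"
      "shift (length (c#w')) x a \<le> length (c#w')"
      using shift_d1[of K x "length (c#w')" a] assms(2-4) a by auto
    show ?thesis using upred_d1[OF P(2) P(3), of U] unfolding P(1) by simp
  qed
  show "upred_holds w' U (shift (length w') (y - 1) a) = upred_holds (c # w') U (shift (length (c # w')) y a)"
  proof -
    have P: "shift (length (c#w')) y a = Suc (shift (length w') (y-1) a)" "3 \<le> shift (length (c#w')) y a"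
      "shift (length (c#w')) y a \<le> length (c#w')"
      using shift_d1[of K y "length (c#w')" a] assms(2-4) a by auto
    show ?thesis using upred_d1[OF P(2) P(3), of U] unfolding P(1) by simp
  qed
next
  fix S a b assume ab: "a \<le> K" "b \<le> K"
    "\<rho>' S (shift (length w') (x-1) (int a)) (shift (length w') (y-1) (- int b))"
    "shift (length w') (x-1) (int a) \<le> shift (length w') (y-1) (- int b)"
  have e1: "shift (length (c # w')) x (int a) = Suc (shift (length w') (x-1) (int a))"
    using shift_d1[of K x "length (c#w')" "int a"] assms(2-4) ab by simp
  have e2: "shift (length (c # w')) y (- int b) = Suc (shift (length w') (y-1) (- int b))"
    using shift_d1[of K y "length (c#w')" "- int b"] assms(2-4) ab by simp
  have "x - 1 \<le> shift (length w') (x-1) (int a)" using shift_ge[of "x-1" "length w'"] assms(2-4) by simp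
  then show "\<rho> S (shift (length (c#w')) x (int a)) (shift (length (c#w')) y (- int b)) \<and>
       shift (length (c#w')) x (int a) \<le> shift (length (c#w')) y (- int b)"
    using r ab(3,4) e1 e2 by fastforce
qed (use assms in auto)

lemma shift_d2: "1 \<le> p \<Longrightarrow> p + K + 2 \<le> n \<Longrightarrow> \<bar>a\<bar> \<le> int K \<Longrightarrow>
   shift n p a = shift (n-1) p a \<and> shift n p a + 2 \<le> n \<and> 1 \<le> shift n p a"
  by (erule int_cases_K) (auto simp: shift_nonneg shift_neg)

lemma upred_d2: "1 \<le> P \<Longrightarrow> P + 2 \<le> length (w'@[c]) \<Longrightarrow> upred_holds (w'@[c]) U P = upred_holds w' U P"
  by (cases U) (auto simp: nth_append)

lemma hyp_d2_fwd:
  assumes "hb K h" "1 \<le> x" "x \<le> y" "y + K + 2 \<le> length (w'@[c])"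
    and r: "\<forall>S i j. j \<le> y \<longrightarrow> \<rho> S i j \<longrightarrow> \<rho>' S i j"
    and "hyp_holds (w'@[c]) \<rho> x y h"
  shows "hyp_holds w' \<rho>' x y h"
proof (rule hyp_transfer[OF assms(1,6)])
  fix U a assume a: "\<bar>a\<bar> \<le> int K"
  show "upred_holds (w'@[c]) U (shift (length (w'@[c])) x a) = upred_holds w' U (shift (length w') x a)"
    using shift_d2[of x K "length (w'@[c])" a] upred_d2[of _ w' c U] assms(2-4) a by simp
  show "upred_holds (w'@[c]) U (shift (length (w'@[c])) y a) = upred_holds w' U (shift (length w') y a)"
    using shift_d2[of y K "length (w'@[c])" a] upred_d2[of _ w' c U] assms(2-4) a by simp
next
  fix S a b assume ab: "a \<le> K" "b \<le> K"
    "\<rho> S (shift (length (w'@[c])) x (int a)) (shift (length (w'@[c])) y (- int b))"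
    "shift (length (w'@[c])) x (int a) \<le> shift (length (w'@[c])) y (- int b)"
  have e1: "shift (length (w'@[c])) x (int a) = shift (length w') x (int a)"
    using shift_d2[of x K "length (w'@[c])" "int a"] assms(2-4) ab by simp
  have e2: "shift (length (w'@[c])) y (- int b) = shift (length w') y (- int b)"
    using shift_d2[of y K "length (w'@[c])" "- int b"] assms(2-4) ab by simp
  have "shift (length (w'@[c])) y (- int b) \<le> y" using shift_le[of y] assms(2-4) by simp
  then show "\<rho>' S (shift (length w') x (int a)) (shift (length w') y (- int b)) \<and>
       shift (length w') x (int a) \<le> shift (length w') y (- int b)"
    using r ab(3,4) e1 e2 by fastforce
qed (use assms in auto)

lemma hyp_d2_bwd:
  assumes "hb K h" "1 \<le> x" "x \<le> y" "y + K + 2 \<le> length (w'@[c])"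
    and r: "\<forall>S i j. j \<le> y \<longrightarrow> \<rho>' S i j \<longrightarrow> \<rho> S i j"
    and "hyp_holds w' \<rho>' x y h"
  shows "hyp_holds (w'@[c]) \<rho> x y h"
proof (rule hyp_transfer[OF assms(1,6)])
  fix U a assume a: "\<bar>a\<bar> \<le> int K"
  show "upred_holds w' U (shift (length w') x a) = upred_holds (w'@[c]) U (shift (length (w'@[c])) x a)"
    using shift_d2[of x K "length (w'@[c])" a] upred_d2[of _ w' c U] assms(2-4) a by simp
  show "upred_holds w' U (shift (length w') y a) = upred_holds (w'@[c]) U (shift (length (w'@[c])) y a)"
    using shift_d2[of y K "length (w'@[c])" a] upred_d2[of _ w' c U] assms(2-4) a by simp
next
  fix S a b assume ab: "a \<le> K" "b \<le> K"
    "\<rho>' S (shift (length w') x (int a)) (shift (length w') y (- int b))"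
    "shift (length w') x (int a) \<le> shift (length w') y (- int b)"
  have e1: "shift (length (w'@[c])) x (int a) = shift (length w') x (int a)"
    using shift_d2[of x K "length (w'@[c])" "int a"] assms(2-4) ab by simp
  have e2: "shift (length (w'@[c])) y (- int b) = shift (length w') y (- int b)"
    using shift_d2[of y K "length (w'@[c])" "- int b"] assms(2-4) ab by simp
  have "shift (length w') y (- int b) \<le> y" using shift_le[of y] assms(2-4) e2 by simp
  then show "\<rho> S (shift (length (w'@[c])) x (int a)) (shift (length (w'@[c])) y (- int b)) \<and>
       shift (length (w'@[c])) x (int a) \<le> shift (length (w'@[c])) y (- int b)"
    unfolding e1 e2 using r[rule_format, OF _ ab(3)] ab(4) by blast
qed (use assms in auto)


definition BDI :: "'a formula \<Rightarrow> 'a list \<Rightarrow> nat \<Rightarrow> nat \<Rightarrow> bool" where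
  "BDI \<phi> W p q = (\<exists>c\<in>set \<phi>. snd c = CBot \<and> (\<exists>x y. p \<le> x \<and> x \<le> y \<and> y \<le> q \<and>
      (\<forall>h\<in>set (fst c). hyp_holds W (der \<phi> W) x y h)))"

definition FullI :: "'a formula \<Rightarrow> 'a list \<Rightarrow> nat \<Rightarrow> nat \<Rightarrow> bool" where
  "FullI \<phi> W p q = (\<exists>c\<in>set \<phi>. snd c = CBot \<and> (\<forall>h\<in>set (fst c). hyp_holds W (der \<phi> W) p q h))"

lemma BDI_split:
  assumes pq: "p < q"
  shows "BDI \<phi> W p q \<longleftrightarrow> BDI \<phi> W (Suc p) q \<or> BDI \<phi> W p (q-1) \<or> FullI \<phi> W p q"
proof
  assume "BDI \<phi> W p q"
  then obtain c x y where c: "c \<in> set \<phi>" "snd c = CBot" "p \<le> x" "x \<le> y" "y \<le> q"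
    and h: "\<forall>h\<in>set (fst c). hyp_holds W (der \<phi> W) x y h" unfolding BDI_def by blast
  show "BDI \<phi> W (Suc p) q \<or> BDI \<phi> W p (q-1) \<or> FullI \<phi> W p q"
  proof (cases "p < x")
    case True
    then have "BDI \<phi> W (Suc p) q" unfolding BDI_def using c h by (intro bexI[OF _ c(1)] conjI exI[of _ x] exI[of _ y]) auto
    then show ?thesis by blast
  next
    case False
    then have x: "x = p" using c by simp
    show ?thesis
    proof (cases "y < q")
      case True
      then have "BDI \<phi> W p (q-1)" unfolding BDI_def using c h by (intro bexI[OF _ c(1)] conjI exI[of _ x] exI[of _ y]) auto
      then show ?thesis by blast
    next
      case False
      then have "y = q" using c by simp
      then have "FullI \<phi> W p q" unfolding FullI_def using c h x by blast
      then show ?thesis by blast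
    qed
  qed
next
  assume "BDI \<phi> W (Suc p) q \<or> BDI \<phi> W p (q-1) \<or> FullI \<phi> W p q"
  then show "BDI \<phi> W p q"
  proof (elim disjE)
    assume "BDI \<phi> W (Suc p) q"
    then obtain c x y where c: "c \<in> set \<phi>" "snd c = CBot" "Suc p \<le> x" "x \<le> y" "y \<le> q"
      and h: "\<forall>h\<in>set (fst c). hyp_holds W (der \<phi> W) x y h" unfolding BDI_def by blast
    show ?thesis unfolding BDI_def using c h by (intro bexI[OF _ c(1)] conjI exI[of _ x] exI[of _ y]) auto
  next
    assume "BDI \<phi> W p (q-1)"
    then obtain c x y where c: "c \<in> set \<phi>" "snd c = CBot" "p \<le> x" "x \<le> y" "y \<le> q - 1"
      and h: "\<forall>h\<in>set (fst c). hyp_holds W (der \<phi> W) x y h" unfolding BDI_def by blast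
    show ?thesis unfolding BDI_def using c h by (intro bexI[OF _ c(1)] conjI exI[of _ x] exI[of _ y]) auto
  next
    assume "FullI \<phi> W p q"
    then obtain c where c: "c \<in> set \<phi>" "snd c = CBot"
      and h: "\<forall>h\<in>set (fst c). hyp_holds W (der \<phi> W) p q h" unfolding FullI_def by blast
    show ?thesis unfolding BDI_def using c h pq by (intro bexI[OF _ c(1)] conjI exI[of _ p] exI[of _ q]) auto
  qed
qed

context
  fixes \<phi> :: "'a formula" and K :: nat
  assumes bnd: "\<forall>c\<in>set \<phi>. \<forall>h\<in>set (fst c). hb K h"
begin

lemma der_d1_fwd: "der \<phi> (l#w') R x y \<Longrightarrow> K+3 \<le> x \<Longrightarrow> der \<phi> w' R (x-1) (y-1)"
proof (induction rule: der.induct)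
  case (der_intro c0 R x y)
  show ?case
  proof (rule der.intros[OF der_intro(1,2)])
    show "1 \<le> x-1" "x-1 \<le> y-1" "y-1 \<le> length w'" using der_intro by auto
    show "\<forall>h\<in>set (fst c0). hyp_holds w' (der \<phi> w') (x-1) (y-1) h"
    proof
      fix h assume h: "h \<in> set (fst c0)"
      show "hyp_holds w' (der \<phi> w') (x-1) (y-1) h"
        apply (rule hyp_d1_fwd[where \<rho>="\<lambda>S i j. der \<phi> (l#w') S i j \<and> (K+3 \<le> i \<longrightarrow> der \<phi> w' S (i-1) (j-1))" and K=K and c=l])
        using bnd der_intro h by auto
    qed
  qed
qed

lemma der_d1_bwd: "der \<phi> w' R x y \<Longrightarrow> K+2 \<le> x \<Longrightarrow> der \<phi> (l#w') R (Suc x) (Suc y)"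
proof (induction rule: der.induct)
  case (der_intro c0 R x y)
  show ?case
  proof (rule der.intros[OF der_intro(1,2)])
    show "1 \<le> Suc x" "Suc x \<le> Suc y" "Suc y \<le> length (l#w')" using der_intro by auto
    show "\<forall>h\<in>set (fst c0). hyp_holds (l#w') (der \<phi> (l#w')) (Suc x) (Suc y) h"
    proof
      fix h assume h: "h \<in> set (fst c0)"
      have "hyp_holds w' (\<lambda>S i j. der \<phi> w' S i j \<and> (K+2 \<le> i \<longrightarrow> der \<phi> (l#w') S (Suc i) (Suc j))) (Suc x - 1) (Suc y - 1) h"
        using der_intro(6) h by simp
      show "hyp_holds (l#w') (der \<phi> (l#w')) (Suc x) (Suc y) h"
        apply (rule hyp_d1_bwd[where \<rho>'="\<lambda>S i j. der \<phi> w' S i j \<and> (K+2 \<le> i \<longrightarrow> der \<phi> (l#w') S (Suc i) (Suc j))" and K=K])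
        using bnd der_intro h \<open>hyp_holds w' _ (Suc x - 1) (Suc y - 1) h\<close> by auto
    qed
  qed
qed

lemma der_d1: "K+3 \<le> x \<Longrightarrow> der \<phi> (l#w') R x y \<longleftrightarrow> der \<phi> w' R (x-1) (y-1)"
proof
  assume "K+3 \<le> x" "der \<phi> (l#w') R x y" then show "der \<phi> w' R (x-1) (y-1)" using der_d1_fwd by blast
next
  assume a: "K+3 \<le> x" "der \<phi> w' R (x-1) (y-1)"
  have b: "x - 1 \<le> y - 1" using der_bounds[OF a(2)] by simp
  have e: "Suc (x-1) = x" "Suc (y-1) = y" using a(1) b by auto
  have "der \<phi> (l#w') R (Suc (x-1)) (Suc (y-1))" by (rule der_d1_bwd[OF a(2)]) (use a(1) in simp)
  then show "der \<phi> (l#w') R x y" unfolding e .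
qed

lemma hyp_d1_iff: "hb K h \<Longrightarrow> K+3 \<le> x \<Longrightarrow> x \<le> y \<Longrightarrow> y \<le> length (l#w') \<Longrightarrow>
   hyp_holds (l#w') (der \<phi> (l#w')) x y h \<longleftrightarrow> hyp_holds w' (der \<phi> w') (x-1) (y-1) h"
proof
  assume a: "hb K h" "K+3 \<le> x" "x \<le> y" "y \<le> length (l#w')" "hyp_holds (l#w') (der \<phi> (l#w')) x y h"
  show "hyp_holds w' (der \<phi> w') (x-1) (y-1) h"
    by (rule hyp_d1_fwd[OF a(1-4) _ a(5)]) (use der_d1 a(2) in auto)
next
  assume a: "hb K h" "K+3 \<le> x" "x \<le> y" "y \<le> length (l#w')" "hyp_holds w' (der \<phi> w') (x-1) (y-1) h"
  show "hyp_holds (l#w') (der \<phi> (l#w')) x y h"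
  proof (rule hyp_d1_bwd[OF a(1-4) _ a(5)], intro allI impI)
    fix S i j assume "x - 1 \<le> i" "der \<phi> w' S i j"
    then show "der \<phi> (l#w') S (Suc i) (Suc j)" using der_d1[of "Suc i" l w' S "Suc j"] a(2) by simp
  qed
qed

lemma der_d2_fwd: "der \<phi> (w'@[l]) R x y \<Longrightarrow> y+K+2 \<le> length (w'@[l]) \<Longrightarrow> der \<phi> w' R x y"
proof (induction rule: der.induct)
  case (der_intro c0 R x y)
  show ?case
  proof (rule der.intros[OF der_intro(1,2)])
    show "1 \<le> x" "x \<le> y" "y \<le> length w'" using der_intro by auto
    show "\<forall>h\<in>set (fst c0). hyp_holds w' (der \<phi> w') x y h"
    proof
      fix h assume h: "h \<in> set (fst c0)"
      show "hyp_holds w' (der \<phi> w') x y h"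
        apply (rule hyp_d2_fwd[where \<rho>="\<lambda>S i j. der \<phi> (w'@[l]) S i j \<and> (j+K+2 \<le> length (w'@[l]) \<longrightarrow> der \<phi> w' S i j)" and K=K and c=l])
        using bnd der_intro h by auto
    qed
  qed
qed

lemma der_d2_bwd: "der \<phi> w' R x y \<Longrightarrow> y+K+2 \<le> length (w'@[l]) \<Longrightarrow> der \<phi> (w'@[l]) R x y"
proof (induction rule: der.induct)
  case (der_intro c0 R x y)
  show ?case
  proof (rule der.intros[OF der_intro(1,2)])
    show "1 \<le> x" "x \<le> y" "y \<le> length (w'@[l])" using der_intro by auto
    show "\<forall>h\<in>set (fst c0). hyp_holds (w'@[l]) (der \<phi> (w'@[l])) x y h"
    proof
      fix h assume h: "h \<in> set (fst c0)"
      show "hyp_holds (w'@[l]) (der \<phi> (w'@[l])) x y h"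
        apply (rule hyp_d2_bwd[where \<rho>'="\<lambda>S i j. der \<phi> w' S i j \<and> (j+K+2 \<le> length (w'@[l]) \<longrightarrow> der \<phi> (w'@[l]) S i j)" and K=K])
        using bnd der_intro h by auto
    qed
  qed
qed

lemma der_d2: "y+K+2 \<le> length (w'@[l]) \<Longrightarrow> der \<phi> (w'@[l]) R x y \<longleftrightarrow> der \<phi> w' R x y"
  using der_d2_fwd der_d2_bwd by blast

lemma hyp_d2_iff: "hb K h \<Longrightarrow> 1 \<le> x \<Longrightarrow> x \<le> y \<Longrightarrow> y + K + 2 \<le> length (w'@[l]) \<Longrightarrow>
   hyp_holds (w'@[l]) (der \<phi> (w'@[l])) x y h \<longleftrightarrow> hyp_holds w' (der \<phi> w') x y h"
proof
  assume a: "hb K h" "1 \<le> x" "x \<le> y" "y + K + 2 \<le> length (w'@[l])" "hyp_holds (w'@[l]) (der \<phi> (w'@[l])) x y h"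
  show "hyp_holds w' (der \<phi> w') x y h"
    by (rule hyp_d2_fwd[OF a(1-4) _ a(5)]) (use der_d2 a(4) in auto)
next
  assume a: "hb K h" "1 \<le> x" "x \<le> y" "y + K + 2 \<le> length (w'@[l])" "hyp_holds w' (der \<phi> w') x y h"
  show "hyp_holds (w'@[l]) (der \<phi> (w'@[l])) x y h"
    by (rule hyp_d2_bwd[OF a(1-4) _ a(5)]) (use der_d2 a(4) in auto)
qed

lemma BDI_d1: "K+3 \<le> p \<Longrightarrow> q \<le> length (l#w') \<Longrightarrow> BDI \<phi> (l#w') p q \<longleftrightarrow> BDI \<phi> w' (p-1) (q-1)"
proof
  assume a: "K+3 \<le> p" "q \<le> length (l#w')" "BDI \<phi> (l#w') p q"
  then obtain c x y where c: "c \<in> set \<phi>" "snd c = CBot" "p \<le> x" "x \<le> y" "y \<le> q"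
    "\<forall>h\<in>set (fst c). hyp_holds (l#w') (der \<phi> (l#w')) x y h" unfolding BDI_def by blast
  have "\<forall>h\<in>set (fst c). hyp_holds w' (der \<phi> w') (x-1) (y-1) h"
    using c hyp_d1_iff[of _ x y l w'] bnd a by auto
  then show "BDI \<phi> w' (p-1) (q-1)" unfolding BDI_def using c
    by (intro bexI[OF _ c(1)] conjI c(2) exI[of _ "x-1"] exI[of _ "y-1"]) auto
next
  assume a: "K+3 \<le> p" "q \<le> length (l#w')" "BDI \<phi> w' (p-1) (q-1)"
  then obtain c x y where c: "c \<in> set \<phi>" "snd c = CBot" "p-1 \<le> x" "x \<le> y" "y \<le> q-1"
    "\<forall>h\<in>set (fst c). hyp_holds w' (der \<phi> w') x y h" unfolding BDI_def by blast
  have "\<forall>h\<in>set (fst c). hyp_holds (l#w') (der \<phi> (l#w')) (Suc x) (Suc y) h"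
    using c hyp_d1_iff[of _ "Suc x" "Suc y" l w'] bnd a by auto
  then show "BDI \<phi> (l#w') p q" unfolding BDI_def using c a
    by (intro bexI[OF _ c(1)] conjI c(2) exI[of _ "Suc x"] exI[of _ "Suc y"]) auto
qed

lemma BDI_d2: "1 \<le> p \<Longrightarrow> q + K + 2 \<le> length (w'@[l]) \<Longrightarrow> BDI \<phi> (w'@[l]) p q \<longleftrightarrow> BDI \<phi> w' p q"
proof -
  assume a: "1 \<le> p" "q + K + 2 \<le> length (w'@[l])"
  have e: "(\<forall>h\<in>set (fst c). hyp_holds (w'@[l]) (der \<phi> (w'@[l])) x y h) \<longleftrightarrow> (\<forall>h\<in>set (fst c). hyp_holds w' (der \<phi> w') x y h)"
    if "p \<le> x" "x \<le> y" "y \<le> q" "c \<in> set \<phi>" for x y c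
  proof -
    have "hyp_holds (w'@[l]) (der \<phi> (w'@[l])) x y h \<longleftrightarrow> hyp_holds w' (der \<phi> w') x y h" if "h \<in> set (fst c)" for h
      by (rule hyp_d2_iff) (use that \<open>p \<le> x\<close> \<open>x \<le> y\<close> \<open>y \<le> q\<close> \<open>c \<in> set \<phi>\<close> a bnd in auto)
    then show ?thesis by blast
  qed
  show ?thesis
  proof
    assume "BDI \<phi> (w'@[l]) p q"
    then obtain c x y where c: "c \<in> set \<phi>" "snd c = CBot" "p \<le> x" "x \<le> y" "y \<le> q"
      and h: "\<forall>h\<in>set (fst c). hyp_holds (w'@[l]) (der \<phi> (w'@[l])) x y h" unfolding BDI_def by blast
    show "BDI \<phi> w' p q" unfolding BDI_def using c h e[OF c(3-5) c(1)] by blast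
  next
    assume "BDI \<phi> w' p q"
    then obtain c x y where c: "c \<in> set \<phi>" "snd c = CBot" "p \<le> x" "x \<le> y" "y \<le> q"
      and h: "\<forall>h\<in>set (fst c). hyp_holds w' (der \<phi> w') x y h" unfolding BDI_def by blast
    show "BDI \<phi> (w'@[l]) p q" unfolding BDI_def using c h e[OF c(3-5) c(1)] by blast
  qed
qed

end

definition CC :: "nat \<Rightarrow> nat" where "CC K = 2 * K + 3"
definition lc2 :: "nat \<Rightarrow> 'a list \<Rightarrow> 'a \<Rightarrow> 'a list" where
  "lc2 K lc l = (if length lc < CC K then lc @ [l] else tl lc @ [l])"
definition rc2 :: "nat \<Rightarrow> 'a \<Rightarrow> 'a list \<Rightarrow> 'a list" where
  "rc2 K l rc = (if length rc < CC K then l # rc else l # butlast rc)"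

lemma lc2_len: "length lc \<le> CC K \<Longrightarrow> length (lc2 K lc l) \<le> CC K"
  by (auto simp: lc2_def CC_def)
lemma rc2_len: "length rc \<le> CC K \<Longrightarrow> length (rc2 K l rc) \<le> CC K"
  by (auto simp: rc2_def CC_def)

context
  fixes \<phi> :: "'a formula" and K :: nat
  assumes bnd: "\<forall>c\<in>set \<phi>. \<forall>h\<in>set (fst c). hb K h"
begin

lemma D1:
  assumes lc: "length lc \<le> CC K" and u: "u \<noteq> []"
  shows "der \<phi> (lc @ u @ rc) S (Suc (length lc) + Suc a) (length lc + length u - b) \<longleftrightarrow>
         der \<phi> (lc2 K lc (hd u) @ tl u @ rc) S (Suc (length (lc2 K lc (hd u))) + a) (length (lc2 K lc (hd u)) + length (tl u) - b)"
proof -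
  obtain l u' where u: "u = l # u'" using u by (cases u) auto
  show ?thesis
  proof (cases "length lc < CC K")
    case True then show ?thesis by (simp add: lc2_def u)
  next
    case False
    then have len: "length lc = 2 * K + 3" using lc by (simp add: CC_def)
    then obtain m lt where lcm: "lc = m # lt" by (cases lc) auto
    have l2: "lc2 K lc (hd u) = lt @ [l]" using False by (simp add: lc2_def lcm u)
    have "der \<phi> (m # (lt @ l # u' @ rc)) S (Suc (length lc) + Suc a) (length lc + length u - b) \<longleftrightarrow>
          der \<phi> (lt @ l # u' @ rc) S (Suc (length lc) + Suc a - 1) (length lc + length u - b - 1)"
      by (rule der_d1[OF bnd]) (use len in simp)
    moreover have "Suc (length lc) + Suc a - 1 = Suc (length (lt @ [l])) + a" using lcm by simp
    moreover have "length lc + length u - b - 1 = length (lt @ [l]) + length u' - b" using lcm u by simp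
    ultimately show ?thesis using lcm u l2 by simp
  qed
qed

lemma D2:
  assumes rc: "length rc \<le> CC K" and u: "u \<noteq> []"
  shows "der \<phi> (lc @ u @ rc) S (Suc (length lc) + a) (length lc + length u - Suc b) \<longleftrightarrow>
         der \<phi> (lc @ butlast u @ rc2 K (last u) rc) S (Suc (length lc) + a) (length lc + length (butlast u) - b)"
proof -
  obtain l u' where u: "u = u' @ [l]" using u by (cases u rule: rev_exhaust) auto
  show ?thesis
  proof (cases "length rc < CC K")
    case True then show ?thesis by (simp add: rc2_def u)
  next
    case False
    then have len: "length rc = 2 * K + 3" using rc by (simp add: CC_def)
    then obtain m rb where rcm: "rc = rb @ [m]" by (cases rc rule: rev_exhaust) auto
    have r2: "rc2 K (last u) rc = l # rb" using False by (simp add: rc2_def rcm u)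
    have "der \<phi> ((lc @ u' @ l # rb) @ [m]) S (Suc (length lc) + a) (length lc + length u - Suc b) \<longleftrightarrow>
          der \<phi> (lc @ u' @ l # rb) S (Suc (length lc) + a) (length lc + length u - Suc b)"
      by (rule der_d2[OF bnd]) (use len rcm u in simp)
    then show ?thesis using rcm u r2 by simp
  qed
qed

lemma BD1:
  assumes lc: "length lc \<le> CC K" and u: "u \<noteq> []"
  shows "BDI \<phi> (lc @ u @ rc) (Suc (Suc (length lc))) (length lc + length u) \<longleftrightarrow>
         BDI \<phi> (lc2 K lc (hd u) @ tl u @ rc) (Suc (length (lc2 K lc (hd u)))) (length (lc2 K lc (hd u)) + length (tl u))"
proof -
  obtain l u' where u: "u = l # u'" using u by (cases u) auto
  show ?thesis
  proof (cases "length lc < CC K")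
    case True then show ?thesis by (simp add: lc2_def u)
  next
    case False
    then have len: "length lc = 2 * K + 3" using lc by (simp add: CC_def)
    then obtain m lt where lcm: "lc = m # lt" by (cases lc) auto
    have l2: "lc2 K lc (hd u) = lt @ [l]" using False by (simp add: lc2_def lcm u)
    have "BDI \<phi> (m # (lt @ l # u' @ rc)) (Suc (Suc (length lc))) (length lc + length u) \<longleftrightarrow>
          BDI \<phi> (lt @ l # u' @ rc) (Suc (Suc (length lc)) - 1) (length lc + length u - 1)"
      by (rule BDI_d1[OF bnd]) (use len lcm u in simp_all)
    then show ?thesis using lcm u l2 by simp
  qed
qed

lemma BD2:
  assumes rc: "length rc \<le> CC K" and u: "u \<noteq> []"
  shows "BDI \<phi> (lc @ u @ rc) (Suc (length lc)) (length lc + length u - 1) \<longleftrightarrow>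
         BDI \<phi> (lc @ butlast u @ rc2 K (last u) rc) (Suc (length lc)) (length lc + length (butlast u))"
proof -
  obtain l u' where u: "u = u' @ [l]" using u by (cases u rule: rev_exhaust) auto
  show ?thesis
  proof (cases "length rc < CC K")
    case True then show ?thesis by (simp add: rc2_def u)
  next
    case False
    then have len: "length rc = 2 * K + 3" using rc by (simp add: CC_def)
    then obtain m rb where rcm: "rc = rb @ [m]" by (cases rc rule: rev_exhaust) auto
    have r2: "rc2 K (last u) rc = l # rb" using False by (simp add: rc2_def rcm u)
    have "BDI \<phi> ((lc @ u' @ l # rb) @ [m]) (Suc (length lc)) (length lc + length u - 1) \<longleftrightarrow>
          BDI \<phi> (lc @ u' @ l # rb) (Suc (length lc)) (length lc + length u - 1)"
      by (rule BDI_d2[OF bnd]) (use len rcm u in simp_all)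
    then show ?thesis using rcm u r2 by simp
  qed
qed

end



context
  fixes K :: nat and lc u v rc :: "'a list"
  assumes lu: "CC K \<le> length u" and lv: "CC K \<le> length v"
    and tk: "take (CC K) u = take (CC K) v" and tkr: "take (CC K) (rev u) = take (CC K) (rev v)"
begin

lemma nth_x: "k < length lc + CC K \<Longrightarrow> (lc@u@rc)!k = (lc@v@rc)!k"
proof (cases "k < length lc")
  case True then show ?thesis by (simp add: nth_append)
next
  case False
  assume k: "k < length lc + CC K"
  define i where "i = k - length lc"
  have i: "i < CC K" "k = length lc + i" using k False by (auto simp: i_def)
  have "u ! i = v ! i" using tk i(1) by (metis nth_take)
  then show ?thesis using i lu lv by (simp add: nth_append)
qed

lemma nth_yu: "t < CC K \<Longrightarrow> (lc@u@rc)!(length lc + length u - Suc t) = (lc@v@rc)!(length lc + length v - Suc t)"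
proof -
  assume t: "t < CC K"
  have "rev u ! t = rev v ! t" using tkr t by (metis nth_take)
  then have "u ! (length u - Suc t) = v ! (length v - Suc t)" using t lu lv by (simp add: rev_nth)
  moreover have "length lc + length u - Suc t = length lc + (length u - Suc t)" using t lu by simp
  moreover have "length lc + length v - Suc t = length lc + (length v - Suc t)" using t lv by simp
  moreover have "(lc@u@rc)!(length lc + (length u - Suc t)) = u!(length u - Suc t)"
    unfolding nth_append_length_plus by (rule nth_append_left) (use t lu in \<open>simp add: CC_def\<close>)
  moreover have "(lc@v@rc)!(length lc + (length v - Suc t)) = v!(length v - Suc t)"
    unfolding nth_append_length_plus by (rule nth_append_left) (use t lv in \<open>simp add: CC_def\<close>)
  ultimately show ?thesis by simp
qed

lemma upX: "1 \<le> P \<Longrightarrow> P \<le> Suc (length lc) + K \<Longrightarrow> upred_holds (lc@u@rc) U P = upred_holds (lc@v@rc) U P"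
proof (cases U)
  case (PQ s)
  assume "1 \<le> P" "P \<le> Suc (length lc) + K"
  then have "P - 1 < length lc + CC K" by (simp add: CC_def)
  then show ?thesis using PQ nth_x by simp
qed (use lu lv in \<open>auto simp: CC_def\<close>)

lemma upYp: "t \<le> length rc \<Longrightarrow> upred_holds (lc@u@rc) U (length lc + length u + t) = upred_holds (lc@v@rc) U (length lc + length v + t)"
proof (cases U)
  case (PQ s)
  assume t: "t \<le> length rc"
  show ?thesis
  proof (cases t)
    case 0
    then show ?thesis using PQ nth_yu[of 0] lu lv by (simp add: CC_def)
  next
    case (Suc t')
    then show ?thesis using PQ t by (simp add: nth_append)
  qed
qed (use lu lv in \<open>auto simp: CC_def\<close>)

lemma upYm: "t \<le> K \<Longrightarrow> upred_holds (lc@u@rc) U (length lc + length u - t) = upred_holds (lc@v@rc) U (length lc + length v - t)"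
proof (cases U)
  case (PQ s)
  assume t: "t \<le> K"
  have "length lc + length u - t - 1 = length lc + length u - Suc t" by simp
  moreover have "length lc + length v - t - 1 = length lc + length v - Suc t" by simp
  ultimately show ?thesis using PQ nth_yu[of t] t by (simp add: CC_def)
qed (use lu lv in \<open>auto simp: CC_def\<close>)

lemma S3_Ux: "\<bar>a\<bar> \<le> int K \<Longrightarrow> upred_holds (lc@u@rc) U (shift (length (lc@u@rc)) (Suc (length lc)) a)
   = upred_holds (lc@v@rc) U (shift (length (lc@v@rc)) (Suc (length lc)) a)"
proof (erule int_cases_K)
  fix k assume k: "a = int k" "k \<le> K"
  have e1: "shift (length (lc@u@rc)) (Suc (length lc)) a = Suc (length lc) + k"
    using k lu by (simp add: shift_nonneg CC_def)
  have e2: "shift (length (lc@v@rc)) (Suc (length lc)) a = Suc (length lc) + k"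
    using k lv by (simp add: shift_nonneg CC_def)
  show ?thesis unfolding e1 e2 by (rule upX) (use k in auto)
next
  fix k assume k: "a = - int k" "k \<le> K"
  have e1: "shift (length (lc@u@rc)) (Suc (length lc)) a = max (Suc (length lc) - k) 1"
    using k lu by (simp add: shift_neg CC_def)
  have e2: "shift (length (lc@v@rc)) (Suc (length lc)) a = max (Suc (length lc) - k) 1"
    using k lv by (simp add: shift_neg CC_def)
  show ?thesis unfolding e1 e2 by (rule upX) auto
qed

lemma S3_Uy: "\<bar>a\<bar> \<le> int K \<Longrightarrow> upred_holds (lc@u@rc) U (shift (length (lc@u@rc)) (length lc + length u) a)
   = upred_holds (lc@v@rc) U (shift (length (lc@v@rc)) (length lc + length v) a)"
proof (erule int_cases_K)
  fix k assume k: "a = int k" "k \<le> K"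
  have e1: "shift (length (lc@u@rc)) (length lc + length u) a = length lc + length u + min k (length rc)"
    using k lu by (simp add: shift_nonneg CC_def)
  have e2: "shift (length (lc@v@rc)) (length lc + length v) a = length lc + length v + min k (length rc)"
    using k lv by (simp add: shift_nonneg CC_def)
  show ?thesis unfolding e1 e2 by (rule upYp) auto
next
  fix k assume k: "a = - int k" "k \<le> K"
  have e1: "shift (length (lc@u@rc)) (length lc + length u) a = length lc + length u - k"
    using k lu by (simp add: shift_neg CC_def)
  have e2: "shift (length (lc@v@rc)) (length lc + length v) a = length lc + length v - k"
    using k lv by (simp add: shift_neg CC_def)
  show ?thesis unfolding e1 e2 by (rule upYm) (use k in auto)
qed

lemma S3_sh:
  assumes "a \<le> K" "b \<le> K"
  shows "shift (length (lc@u@rc)) (Suc (length lc)) (int a) = Suc (length lc) + a"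
    "shift (length (lc@u@rc)) (length lc + length u) (- int b) = length lc + length u - b"
    "shift (length (lc@v@rc)) (Suc (length lc)) (int a) = Suc (length lc) + a"
    "shift (length (lc@v@rc)) (length lc + length v) (- int b) = length lc + length v - b"
    "Suc (length lc) + a \<le> length lc + length u - b"
    "Suc (length lc) + a \<le> length lc + length v - b"
  using assms lu lv by (auto simp: shift_nonneg shift_neg CC_def)

end


context
  fixes \<phi> :: "'a formula" and K :: nat and lc u v rc :: "'a list"
  assumes bnd: "\<forall>c\<in>set \<phi>. \<forall>h\<in>set (fst c). hb K h"
    and lu: "CC K \<le> length u" and lv: "CC K \<le> length v"
    and tk: "take (CC K) u = take (CC K) v" and tkr: "take (CC K) (rev u) = take (CC K) (rev v)"
begin

lemma S3_der:
  assumes F: "\<And>S a b. a \<le> K \<Longrightarrow> b \<le> K \<Longrightarrow> (a,b) \<noteq> (0,0) \<Longrightarrow>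
      der \<phi> (lc@u@rc) S (Suc (length lc) + a) (length lc + length u - b) \<Longrightarrow>
      der \<phi> (lc@v@rc) S (Suc (length lc) + a) (length lc + length v - b)"
  shows "der \<phi> (lc@u@rc) R x y \<Longrightarrow> x = Suc (length lc) \<Longrightarrow> y = length lc + length u \<Longrightarrow>
     der \<phi> (lc@v@rc) R (Suc (length lc)) (length lc + length v)"
proof (induction rule: der.induct)
  case (der_intro c0 R x y)
  show ?case
  proof (rule der.intros[OF der_intro(1,2)])
    show "1 \<le> Suc (length lc)" "Suc (length lc) \<le> length lc + length v" "length lc + length v \<le> length (lc@v@rc)"
      using lv by (auto simp: CC_def)
    show "\<forall>h\<in>set (fst c0). hyp_holds (lc@v@rc) (der \<phi> (lc@v@rc)) (Suc (length lc)) (length lc + length v) h"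
    proof
      fix h assume h: "h \<in> set (fst c0)"
      show "hyp_holds (lc@v@rc) (der \<phi> (lc@v@rc)) (Suc (length lc)) (length lc + length v) h"
      proof (rule hyp_transfer[where K=K and w="lc@u@rc" and x="Suc (length lc)" and y="length lc + length u"
            and \<rho>="\<lambda>S i j. der \<phi> (lc@u@rc) S i j \<and> (i = Suc (length lc) \<longrightarrow> j = length lc + length u \<longrightarrow>
               der \<phi> (lc@v@rc) S (Suc (length lc)) (length lc + length v))"])
        show "hb K h" using bnd der_intro(1) h by auto
        show "hyp_holds (lc@u@rc) (\<lambda>S i j. der \<phi> (lc@u@rc) S i j \<and> (i = Suc (length lc) \<longrightarrow> j = length lc + length u \<longrightarrow>
               der \<phi> (lc@v@rc) S (Suc (length lc)) (length lc + length v))) (Suc (length lc)) (length lc + length u) h"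
          using der_intro(6,7,8) h by simp
        show "\<And>U a. \<bar>a\<bar> \<le> int K \<Longrightarrow> upred_holds (lc@u@rc) U (shift (length (lc@u@rc)) (Suc (length lc)) a) =
             upred_holds (lc@v@rc) U (shift (length (lc@v@rc)) (Suc (length lc)) a)"
          by (rule S3_Ux[OF lu lv tk tkr])
        show "\<And>U a. \<bar>a\<bar> \<le> int K \<Longrightarrow> upred_holds (lc@u@rc) U (shift (length (lc@u@rc)) (length lc + length u) a) =
             upred_holds (lc@v@rc) U (shift (length (lc@v@rc)) (length lc + length v) a)"
          by (rule S3_Uy[OF lu lv tk tkr])
        show "(Suc (length lc) = length lc + length u) = (Suc (length lc) = length lc + length v)"
          "(Suc (length lc) < length lc + length u) = (Suc (length lc) < length lc + length v)"
          using lu lv by (auto simp: CC_def)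
      next
        fix S a b assume ab: "a \<le> K" "b \<le> K"
          "der \<phi> (lc@u@rc) S (shift (length (lc@u@rc)) (Suc (length lc)) (int a)) (shift (length (lc@u@rc)) (length lc + length u) (- int b)) \<and>
           (shift (length (lc@u@rc)) (Suc (length lc)) (int a) = Suc (length lc) \<longrightarrow> shift (length (lc@u@rc)) (length lc + length u) (- int b) = length lc + length u \<longrightarrow>
               der \<phi> (lc@v@rc) S (Suc (length lc)) (length lc + length v))"
        note sh = S3_sh[where lc=lc, OF lu lv tk tkr ab(1,2)]
        have "der \<phi> (lc@v@rc) S (Suc (length lc) + a) (length lc + length v - b)"
        proof (cases "(a,b) = (0,0)")
          case True then show ?thesis using ab(3) unfolding sh by simp
        next
          case False then show ?thesis using ab F unfolding sh by blast
        qed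
        then show "der \<phi> (lc@v@rc) S (shift (length (lc@v@rc)) (Suc (length lc)) (int a)) (shift (length (lc@v@rc)) (length lc + length v) (- int b)) \<and>
          shift (length (lc@v@rc)) (Suc (length lc)) (int a) \<le> shift (length (lc@v@rc)) (length lc + length v) (- int b)"
          using sh(6) unfolding sh(1-4) by simp
      qed
    qed
  qed
qed

lemma S3_full:
  assumes F: "\<And>S a b. a \<le> K \<Longrightarrow> b \<le> K \<Longrightarrow>
      der \<phi> (lc@u@rc) S (Suc (length lc) + a) (length lc + length u - b) \<Longrightarrow>
      der \<phi> (lc@v@rc) S (Suc (length lc) + a) (length lc + length v - b)"
  shows "FullI \<phi> (lc@u@rc) (Suc (length lc)) (length lc + length u) \<Longrightarrow> FullI \<phi> (lc@v@rc) (Suc (length lc)) (length lc + length v)"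
proof -
  assume "FullI \<phi> (lc@u@rc) (Suc (length lc)) (length lc + length u)"
  then obtain c where c: "c \<in> set \<phi>" "snd c = CBot"
    and h: "\<forall>h\<in>set (fst c). hyp_holds (lc@u@rc) (der \<phi> (lc@u@rc)) (Suc (length lc)) (length lc + length u) h"
    unfolding FullI_def by blast
  have "hyp_holds (lc@v@rc) (der \<phi> (lc@v@rc)) (Suc (length lc)) (length lc + length v) h" if hh: "h \<in> set (fst c)" for h
  proof (rule hyp_transfer[where K=K and w="lc@u@rc" and x="Suc (length lc)" and y="length lc + length u" and \<rho>="der \<phi> (lc@u@rc)"])
    show "hb K h" using bnd c(1) hh by auto
    show "hyp_holds (lc@u@rc) (der \<phi> (lc@u@rc)) (Suc (length lc)) (length lc + length u) h" using h hh by blast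
    show "\<And>U a. \<bar>a\<bar> \<le> int K \<Longrightarrow> upred_holds (lc@u@rc) U (shift (length (lc@u@rc)) (Suc (length lc)) a) =
         upred_holds (lc@v@rc) U (shift (length (lc@v@rc)) (Suc (length lc)) a)"
      by (rule S3_Ux[OF lu lv tk tkr])
    show "\<And>U a. \<bar>a\<bar> \<le> int K \<Longrightarrow> upred_holds (lc@u@rc) U (shift (length (lc@u@rc)) (length lc + length u) a) =
         upred_holds (lc@v@rc) U (shift (length (lc@v@rc)) (length lc + length v) a)"
      by (rule S3_Uy[OF lu lv tk tkr])
    show "(Suc (length lc) = length lc + length u) = (Suc (length lc) = length lc + length v)"
      "(Suc (length lc) < length lc + length u) = (Suc (length lc) < length lc + length v)"
      using lu lv by (auto simp: CC_def)
  next
    fix S a b assume ab: "a \<le> K" "b \<le> K"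
      "der \<phi> (lc@u@rc) S (shift (length (lc@u@rc)) (Suc (length lc)) (int a)) (shift (length (lc@u@rc)) (length lc + length u) (- int b))"
    note sh = S3_sh[where lc=lc, OF lu lv tk tkr ab(1,2)]
    show "der \<phi> (lc@v@rc) S (shift (length (lc@v@rc)) (Suc (length lc)) (int a)) (shift (length (lc@v@rc)) (length lc + length v) (- int b)) \<and>
      shift (length (lc@v@rc)) (Suc (length lc)) (int a) \<le> shift (length (lc@v@rc)) (length lc + length v) (- int b)"
      using F[OF ab(1,2)] ab(3) sh(6) unfolding sh(1-4) by simp
  qed
  then show ?thesis unfolding FullI_def using c by blast
qed

end

definition FSet :: "'a formula \<Rightarrow> nat \<Rightarrow> 'a list \<Rightarrow> ('a list \<times> 'a list \<times> nat \<times> nat \<times> nat) set" where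
  "FSet \<phi> K u = {(lc, rc, S, a, b). length lc \<le> CC K \<and> length rc \<le> CC K \<and> a \<le> K \<and> b \<le> K \<and>
     der \<phi> (lc@u@rc) S (Suc (length lc) + a) (length lc + length u - b)}"

definition BSet :: "'a formula \<Rightarrow> nat \<Rightarrow> 'a list \<Rightarrow> ('a list \<times> 'a list) set" where
  "BSet \<phi> K u = {(lc, rc). length lc \<le> CC K \<and> length rc \<le> CC K \<and>
     BDI \<phi> (lc@u@rc) (Suc (length lc)) (length lc + length u)}"

definition Ity where
  "Ity \<phi> K u = (take (CC K) u, take (CC K) (rev u), FSet \<phi> K u, BSet \<phi> K u)"

lemma FSet_mem: "(lc, rc, S, a, b) \<in> FSet \<phi> K u \<longleftrightarrow> length lc \<le> CC K \<and> length rc \<le> CC K \<and> a \<le> K \<and> b \<le> K \<and>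
     der \<phi> (lc@u@rc) S (Suc (length lc) + a) (length lc + length u - b)"
  by (simp add: FSet_def)

lemma BSet_mem: "(lc, rc) \<in> BSet \<phi> K u \<longleftrightarrow> length lc \<le> CC K \<and> length rc \<le> CC K \<and>
     BDI \<phi> (lc@u@rc) (Suc (length lc)) (length lc + length u)"
  by (simp add: BSet_def)

lemma take_comb:
  assumes "2 \<le> length u" "2 \<le> length v" "0 < n" "take n (butlast u) = take n (butlast v)" "take n (tl u) = take n (tl v)"
  shows "take n u = take n v"
proof -
  have tu: "take n u = hd u # take (n-1) (tl u)" if "u \<noteq> []" for u :: "'a list"
    using that \<open>0 < n\<close> by (cases u; cases n) auto
  have hb: "hd (butlast u) = hd u" if "2 \<le> length u" for u :: "'a list"
    using that by (cases u) auto
  have "hd (take n (butlast u)) = hd (take n (butlast v))" using assms(4) by simp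
  then have h: "hd u = hd v" using hb[OF assms(1)] hb[OF assms(2)] \<open>0 < n\<close> by simp
  have "take (n-1) (tl u) = take (n-1) (tl v)"
    using arg_cong[OF assms(5), of "take (n-1)"] by simp
  moreover have "u \<noteq> []" "v \<noteq> []" using assms(1,2) by auto
  ultimately show ?thesis using tu[of u] tu[of v] h by simp
qed

lemma short_eq: "take n u = take n v \<Longrightarrow> length u < n \<Longrightarrow> u = v"
proof -
  assume t: "take n u = take n v" and l: "length u < n"
  have u: "take n u = u" using l by simp
  have "length (take n v) = length u" using t u by simp
  then have "length v < n" using l by simp
  then show "u = v" using t u by simp
qed

lemma Ity_comb:
  assumes bnd: "\<forall>c\<in>set \<phi>. \<forall>h\<in>set (fst c). hb K h"
    and u2: "2 \<le> length u" and v2: "2 \<le> length v"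
    and It: "Ity \<phi> K (tl u) = Ity \<phi> K (tl v)" and Ib: "Ity \<phi> K (butlast u) = Ity \<phi> K (butlast v)"
  shows "Ity \<phi> K u = Ity \<phi> K v"
proof -
  have C0: "0 < CC K" by (simp add: CC_def)
  have tkt: "take (CC K) (tl u) = take (CC K) (tl v)" and tkrt: "take (CC K) (rev (tl u)) = take (CC K) (rev (tl v))"
    and Ft: "FSet \<phi> K (tl u) = FSet \<phi> K (tl v)" and Bt: "BSet \<phi> K (tl u) = BSet \<phi> K (tl v)"
    using It by (auto simp: Ity_def)
  have tkb: "take (CC K) (butlast u) = take (CC K) (butlast v)" and tkrb: "take (CC K) (rev (butlast u)) = take (CC K) (rev (butlast v))"
    and Fb: "FSet \<phi> K (butlast u) = FSet \<phi> K (butlast v)" and Bb: "BSet \<phi> K (butlast u) = BSet \<phi> K (butlast v)"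
    using Ib by (auto simp: Ity_def)
  have tk: "take (CC K) u = take (CC K) v" by (rule take_comb[OF u2 v2 C0 tkb tkt])
  have tlrev: "tl (rev x) = rev (butlast x)" for x :: "'a list"
    by (cases x rule: rev_exhaust) auto
  have tkr: "take (CC K) (rev u) = take (CC K) (rev v)"
    by (rule take_comb) (use u2 v2 C0 tkrt tkrb tlrev in auto)
  show ?thesis
  proof (cases "length u < CC K \<or> length v < CC K")
    case True
    then have "u = v" using short_eq[OF tk] short_eq[OF tk[symmetric]] by auto
    then show ?thesis by simp
  next
    case False
    then have lu: "CC K \<le> length u" and lv: "CC K \<le> length v" by auto
    have une: "u \<noteq> []" "v \<noteq> []" using u2 v2 by auto
    have hd: "hd u = hd v" using arg_cong[OF tk, of hd] C0 by simp
    have lst: "last u = last v" using arg_cong[OF tkr, of hd] C0 by (simp add: hd_rev)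
    have Foff: "der \<phi> (lc@u@rc) S (Suc (length lc) + a) (length lc + length u - b) \<longleftrightarrow>
                der \<phi> (lc@v@rc) S (Suc (length lc) + a) (length lc + length v - b)"
      if lc: "length lc \<le> CC K" and rc: "length rc \<le> CC K" and ab: "a \<le> K" "b \<le> K" "(a,b) \<noteq> (0,0)" for lc rc S a b
    proof (cases a)
      case (Suc a')
      have "der \<phi> (lc@u@rc) S (Suc (length lc) + a) (length lc + length u - b) \<longleftrightarrow>
            (lc2 K lc (hd u), rc, S, a', b) \<in> FSet \<phi> K (tl u)"
        unfolding FSet_mem Suc using D1[OF bnd lc une(1), of rc S a' b] lc2_len[OF lc] rc ab Suc by auto
      also have "\<dots> \<longleftrightarrow> (lc2 K lc (hd v), rc, S, a', b) \<in> FSet \<phi> K (tl v)" using Ft hd by simp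
      also have "\<dots> \<longleftrightarrow> der \<phi> (lc@v@rc) S (Suc (length lc) + a) (length lc + length v - b)"
        unfolding FSet_mem Suc using D1[OF bnd lc une(2), of rc S a' b] lc2_len[OF lc] rc ab Suc by auto
      finally show ?thesis .
    next
      case 0
      then obtain b' where b: "b = Suc b'" using ab(3) by (cases b) auto
      have "der \<phi> (lc@u@rc) S (Suc (length lc) + a) (length lc + length u - b) \<longleftrightarrow>
            (lc, rc2 K (last u) rc, S, a, b') \<in> FSet \<phi> K (butlast u)"
        unfolding FSet_mem b using D2[OF bnd rc une(1), of lc S a b'] rc2_len[OF rc] lc ab b by auto
      also have "\<dots> \<longleftrightarrow> (lc, rc2 K (last v) rc, S, a, b') \<in> FSet \<phi> K (butlast v)" using Fb lst by simp
      also have "\<dots> \<longleftrightarrow> der \<phi> (lc@v@rc) S (Suc (length lc) + a) (length lc + length v - b)"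
        unfolding FSet_mem b using D2[OF bnd rc une(2), of lc S a b'] rc2_len[OF rc] lc ab b by auto
      finally show ?thesis .
    qed
    have Fall: "der \<phi> (lc@u@rc) S (Suc (length lc) + a) (length lc + length u - b) \<longleftrightarrow>
                der \<phi> (lc@v@rc) S (Suc (length lc) + a) (length lc + length v - b)"
      if lc: "length lc \<le> CC K" and rc: "length rc \<le> CC K" and ab: "a \<le> K" "b \<le> K" for lc rc S a b
    proof (cases "(a,b) = (0,0)")
      case False then show ?thesis using Foff lc rc ab by blast
    next
      case True
      have 1: "der \<phi> (lc@v@rc) S (Suc (length lc)) (length lc + length v)" if "der \<phi> (lc@u@rc) S (Suc (length lc)) (length lc + length u)"
        by (rule S3_der[OF bnd lu lv tk tkr _ that refl refl]) (use Foff[OF lc rc] in blast)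
      have 2: "der \<phi> (lc@u@rc) S (Suc (length lc)) (length lc + length u)" if "der \<phi> (lc@v@rc) S (Suc (length lc)) (length lc + length v)"
        by (rule S3_der[OF bnd lv lu tk[symmetric] tkr[symmetric] _ that refl refl]) (use Foff[OF lc rc] in blast)
      show ?thesis using 1 2 True by auto
    qed
    have FS: "FSet \<phi> K u = FSet \<phi> K v"
    proof (rule set_eqI)
      fix z :: "'a list \<times> 'a list \<times> nat \<times> nat \<times> nat"
      obtain lc rc S a b where z: "z = (lc, rc, S, a, b)" by (cases z)
      show "z \<in> FSet \<phi> K u \<longleftrightarrow> z \<in> FSet \<phi> K v" unfolding z FSet_mem using Fall by blast
    qed
    have BS: "BSet \<phi> K u = BSet \<phi> K v"
    proof (rule set_eqI)
      fix z :: "'a list \<times> 'a list"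
      obtain lc rc where z: "z = (lc, rc)" by (cases z)
      have "BDI \<phi> (lc@u@rc) (Suc (length lc)) (length lc + length u) \<longleftrightarrow> BDI \<phi> (lc@v@rc) (Suc (length lc)) (length lc + length v)"
        if lc: "length lc \<le> CC K" and rc: "length rc \<le> CC K"
      proof -
        have sp: "BDI \<phi> (lc@w@rc) (Suc (length lc)) (length lc + length w) \<longleftrightarrow>
            BDI \<phi> (lc@w@rc) (Suc (Suc (length lc))) (length lc + length w) \<or>
            BDI \<phi> (lc@w@rc) (Suc (length lc)) (length lc + length w - 1) \<or>
            FullI \<phi> (lc@w@rc) (Suc (length lc)) (length lc + length w)" if "2 \<le> length w" for w
          by (rule BDI_split) (use that in simp)
        have a1: "BDI \<phi> (lc@u@rc) (Suc (Suc (length lc))) (length lc + length u) \<longleftrightarrow>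
                  BDI \<phi> (lc@v@rc) (Suc (Suc (length lc))) (length lc + length v)"
        proof -
          have "BDI \<phi> (lc@u@rc) (Suc (Suc (length lc))) (length lc + length u) \<longleftrightarrow> (lc2 K lc (hd u), rc) \<in> BSet \<phi> K (tl u)"
            unfolding BSet_mem using BD1[OF bnd lc une(1), of rc] lc2_len[OF lc] rc by auto
          also have "\<dots> \<longleftrightarrow> (lc2 K lc (hd v), rc) \<in> BSet \<phi> K (tl v)" using Bt hd by simp
          also have "\<dots> \<longleftrightarrow> BDI \<phi> (lc@v@rc) (Suc (Suc (length lc))) (length lc + length v)"
            unfolding BSet_mem using BD1[OF bnd lc une(2), of rc] lc2_len[OF lc] rc by auto
          finally show ?thesis .
        qed
        have a2: "BDI \<phi> (lc@u@rc) (Suc (length lc)) (length lc + length u - 1) \<longleftrightarrow>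
                  BDI \<phi> (lc@v@rc) (Suc (length lc)) (length lc + length v - 1)"
        proof -
          have "BDI \<phi> (lc@u@rc) (Suc (length lc)) (length lc + length u - 1) \<longleftrightarrow> (lc, rc2 K (last u) rc) \<in> BSet \<phi> K (butlast u)"
            unfolding BSet_mem using BD2[OF bnd rc une(1), of lc] rc2_len[OF rc] lc by auto
          also have "\<dots> \<longleftrightarrow> (lc, rc2 K (last v) rc) \<in> BSet \<phi> K (butlast v)" using Bb lst by simp
          also have "\<dots> \<longleftrightarrow> BDI \<phi> (lc@v@rc) (Suc (length lc)) (length lc + length v - 1)"
            unfolding BSet_mem using BD2[OF bnd rc une(2), of lc] rc2_len[OF rc] lc by auto
          finally show ?thesis .
        qed
        have a3: "FullI \<phi> (lc@u@rc) (Suc (length lc)) (length lc + length u) \<longleftrightarrow>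
                  FullI \<phi> (lc@v@rc) (Suc (length lc)) (length lc + length v)"
          using S3_full[OF bnd lu lv tk tkr, of lc rc] S3_full[OF bnd lv lu tk[symmetric] tkr[symmetric], of lc rc]
            Fall[OF lc rc] by blast
        show ?thesis using sp[OF u2] sp[OF v2] a1 a2 a3 by blast
      qed
      then show "z \<in> BSet \<phi> K u \<longleftrightarrow> z \<in> BSet \<phi> K v" unfolding z BSet_mem by blast
    qed
    show ?thesis unfolding Ity_def using tk tkr FS BS by simp
  qed
qed

lemma Ity_inv: "u \<noteq> [] \<Longrightarrow> sat u \<phi> \<longleftrightarrow> ([], []) \<notin> BSet \<phi> K u"
proof -
  have "([], []) \<in> BSet \<phi> K u \<longleftrightarrow> BDI \<phi> u (Suc 0) (length u)" by (simp add: BSet_mem)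
  moreover have "sat u \<phi> \<longleftrightarrow> \<not> BDI \<phi> u (Suc 0) (length u)"
    unfolding sat_iff BDI_def by (simp only: One_nat_def) blast
  ultimately show ?thesis by simp
qed

lemma Ity_fin: "finite (range (Ity \<phi> K :: ('a::finite) list \<Rightarrow> _))"
proof -
  define Ctx where "Ctx = {xs :: 'a list. set xs \<subseteq> UNIV \<and> length xs \<le> CC K}"
  have fC: "finite Ctx" unfolding Ctx_def by (rule finite_lists_length_le) simp
  define Rels where "Rels = (\<lambda>c. case snd c of CRel S \<Rightarrow> S | CBot \<Rightarrow> 0) ` set \<phi>"
  have fR: "finite Rels" unfolding Rels_def by simp
  have "range (Ity \<phi> K) \<subseteq> Ctx \<times> Ctx \<times> Pow (Ctx \<times> Ctx \<times> Rels \<times> {..K} \<times> {..K}) \<times> Pow (Ctx \<times> Ctx)"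
  proof
    fix z assume "z \<in> range (Ity \<phi> K)"
    then obtain u where z: "z = Ity \<phi> K u" by blast
    have "FSet \<phi> K u \<subseteq> Ctx \<times> Ctx \<times> Rels \<times> {..K} \<times> {..K}"
    proof
      fix y assume y: "y \<in> FSet \<phi> K u"
      obtain lc rc S a b where yy: "y = (lc, rc, S, a, b)" by (cases y)
      have m: "length lc \<le> CC K" "length rc \<le> CC K" "a \<le> K" "b \<le> K"
        "der \<phi> (lc@u@rc) S (Suc (length lc) + a) (length lc + length u - b)"
        using y unfolding yy FSet_mem by auto
      obtain c where "c \<in> set \<phi>" "snd c = CRel S" using der_bounds[OF m(5)] by blast
      then have "S \<in> Rels" unfolding Rels_def by (intro image_eqI[where x=c]) auto
      moreover have "lc \<in> Ctx" "rc \<in> Ctx" using m unfolding Ctx_def by auto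
      ultimately show "y \<in> Ctx \<times> Ctx \<times> Rels \<times> {..K} \<times> {..K}" using m unfolding yy by auto
    qed
    moreover have "BSet \<phi> K u \<subseteq> Ctx \<times> Ctx" unfolding BSet_def Ctx_def by auto
    moreover have "take (CC K) u \<in> Ctx" "take (CC K) (rev u) \<in> Ctx" unfolding Ctx_def by auto
    ultimately show "z \<in> Ctx \<times> Ctx \<times> Pow (Ctx \<times> Ctx \<times> Rels \<times> {..K} \<times> {..K}) \<times> Pow (Ctx \<times> Ctx)"
      unfolding z Ity_def by blast
  qed
  moreover have "finite (Ctx \<times> Ctx \<times> Pow (Ctx \<times> Ctx \<times> Rels \<times> {..K} \<times> {..K}) \<times> Pow (Ctx \<times> Ctx))"
    using fC fR by (intro finite_cartesian_product finite_Pow_iff[THEN iffD2]) auto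
  ultimately show ?thesis by (rule finite_subset)
qed

theorem lemma2:
  fixes \<phi> :: "('a::finite) formula"
  shows "\<exists>\<phi>'. normal_form \<phi>' \<and> (\<forall>w::'a list. w \<noteq> [] \<longrightarrow> (sat w \<phi> \<longleftrightarrow> sat w \<phi>'))"
proof -
  have "finite (\<Union>c\<in>set \<phi>. set (fst c))" by simp
  then obtain K where K: "\<forall>h\<in>(\<Union>c\<in>set \<phi>. set (fst c)). hb K h" using hb_exists by blast
  then have bnd: "\<forall>c\<in>set \<phi>. \<forall>h\<in>set (fst c). hb K h" by blast
  have "\<exists>\<phi>'. normal_form \<phi>' \<and> (\<forall>w::'a list. w \<noteq> [] \<longrightarrow> (w \<in> {w. sat w \<phi>} \<longleftrightarrow> sat w \<phi>'))"
  proof (rule dta[where I="Ity \<phi> K"])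
    show "finite (range (Ity \<phi> K))" by (rule Ity_fin)
    show "\<And>u v. 2 \<le> length u \<Longrightarrow> 2 \<le> length v \<Longrightarrow> Ity \<phi> K (tl u) = Ity \<phi> K (tl v) \<Longrightarrow>
        Ity \<phi> K (butlast u) = Ity \<phi> K (butlast v) \<Longrightarrow> Ity \<phi> K u = Ity \<phi> K v"
      by (rule Ity_comb[OF bnd])
    fix u v :: "'a list" assume uv: "u \<noteq> []" "v \<noteq> []" "Ity \<phi> K u = Ity \<phi> K v"
    then have "BSet \<phi> K u = BSet \<phi> K v" by (simp add: Ity_def)
    then show "(u \<in> {w. sat w \<phi>}) = (v \<in> {w. sat w \<phi>})"
      using Ity_inv[OF uv(1), of \<phi> K] Ity_inv[OF uv(2), of \<phi> K] by simp
  qed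
  then show ?thesis by simp
qed

end
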